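(* Let $\alpha\colon\Gamma\curvearrowright X$ be an action of a countable group on a compact, Hausdorff, $0$-dimensional space. The natural semigroup homomorphism $\pi\colon T(\alpha)\to H(\alpha)$ is injective if and only if $T(\alpha)$ is cancellative.
   Context: Clopen type semigroup: let $Y = X\times\mathbb N$, and let $\tilde\Gamma=\Gamma\times\mathfrak S$ ($\mathfrak S$ the permutation group of $\mathbb N$) act on $Y$ by $(\gamma,\sigma)(x,n)=(\alpha(\gamma)x,\sigma(n))$. A clopen $A\subseteq Y$ is bounded if $A\cap(X\times\{n\})=\emptyset$ for all large $n$. Bounded clopen $A,B$ are equidecomposable if there are clopen $A_1,\dots,A_n$ and $\tilde\gamma_i\in\tilde\Gamma$ with $A=\bigsqcup_i A_i$, $B=\bigsqcup_i\tilde\gamma_iA_i$. $T(\alpha)$ is the set of classes $[A]$, with $[A]+[B]=[A'\sqcup B']$ for disjoint representatives. Cancellative: $a+b=a+c\Rightarrow b=c$. The $0$-homology group is $H(\alpha)=C(X,\mathbb Z)/\langle f-f\circ\alpha(\gamma): f\in C(X,\mathbb Z),\gamma\in\Gamma\rangle$. The map $\pi$ sends $[A]$, for a bounded clopen $A=\bigsqcup_i A_i\times\{i\}$, to the class in $H(\alpha)$ of $\sum_i \mathbf 1_{A_i}$ (this is a well-defined monoid homomorphism onto the image of $C(X,\mathbb N)$). *)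

theory Defs
  imports "HOL-Analysis.Analysis"
begin

text \<open>Y = X \<times> nat with the product topology (nat discrete).
  The group \<Gamma> is a (not necessarily abelian) group written additively (class group_add).\<close>

definition clopen_set :: "'a::topological_space set \<Rightarrow> bool" where
  "clopen_set A \<longleftrightarrow> open A \<and> closed A"

definition bounded_clopen :: "('x::topological_space \<times> nat) set \<Rightarrow> bool" where
  "bounded_clopen A \<longleftrightarrow> clopen_set A \<and> (\<exists>N. \<forall>x n. (x, n) \<in> A \<longrightarrow> n < N)"

definition tact :: "('g \<Rightarrow> 'x \<Rightarrow> 'x) \<Rightarrow> 'g \<Rightarrow> (nat \<Rightarrow> nat) \<Rightarrow> ('x \<times> nat) set \<Rightarrow> ('x \<times> nat) set" where
  "tact \<alpha> g \<sigma> A = (\<lambda>(x, k). (\<alpha> g x, \<sigma> k)) ` A"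

definition equidec :: "('g \<Rightarrow> 'x::topological_space \<Rightarrow> 'x) \<Rightarrow> ('x \<times> nat) set \<Rightarrow> ('x \<times> nat) set \<Rightarrow> bool" where
  "equidec \<alpha> A B \<longleftrightarrow>
     (\<exists>(n::nat) (P :: nat \<Rightarrow> ('x \<times> nat) set) (g :: nat \<Rightarrow> 'g) (s :: nat \<Rightarrow> nat \<Rightarrow> nat).
        (\<forall>i<n. clopen_set (P i) \<and> bij (s i)) \<and>
        disjoint_family_on P {..<n} \<and> A = (\<Union>i<n. P i) \<and>
        disjoint_family_on (\<lambda>i. tact \<alpha> (g i) (s i) (P i)) {..<n} \<and>
        B = (\<Union>i<n. tact \<alpha> (g i) (s i) (P i)))"

definition Teq :: "('g \<Rightarrow> 'x::topological_space \<Rightarrow> 'x) \<Rightarrow> (('x \<times> nat) set \<times> ('x \<times> nat) set) set" where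
  "Teq \<alpha> = {(A, B). bounded_clopen A \<and> bounded_clopen B \<and> equidec \<alpha> A B}"

definition Tsg :: "('g \<Rightarrow> 'x::topological_space \<Rightarrow> 'x) \<Rightarrow> ('x \<times> nat) set set set" where
  "Tsg \<alpha> = {A. bounded_clopen A} // Teq \<alpha>"

definition Tplus :: "('g \<Rightarrow> 'x::topological_space \<Rightarrow> 'x) \<Rightarrow> ('x \<times> nat) set set \<Rightarrow> ('x \<times> nat) set set \<Rightarrow> ('x \<times> nat) set set" where
  "Tplus \<alpha> a b = {D. \<exists>A\<in>a. \<exists>B\<in>b. A \<inter> B = {} \<and> (A \<union> B, D) \<in> Teq \<alpha>}"

definition T_cancellative :: "('g \<Rightarrow> 'x::topological_space \<Rightarrow> 'x) \<Rightarrow> bool" where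
  "T_cancellative \<alpha> \<longleftrightarrow>
     (\<forall>a\<in>Tsg \<alpha>. \<forall>b\<in>Tsg \<alpha>. \<forall>c\<in>Tsg \<alpha>. Tplus \<alpha> a b = Tplus \<alpha> a c \<longrightarrow> b = c)"

text \<open>Coboundary subgroup of C(X,\<int>): generated by f - f \<circ> \<alpha>(\<gamma>); its elements are finite sums
  of such generators (negatives are absorbed by replacing f with -f).\<close>
definition coboundaries :: "('g \<Rightarrow> 'x::topological_space \<Rightarrow> 'x) \<Rightarrow> ('x \<Rightarrow> int) set" where
  "coboundaries \<alpha> = {h. \<exists>(n::nat) (f :: nat \<Rightarrow> 'x \<Rightarrow> int) (g :: nat \<Rightarrow> 'g).
      (\<forall>i<n. continuous_on UNIV (f i)) \<and>
      h = (\<lambda>x. \<Sum>i<n. f i x - f i (\<alpha> (g i) x))}"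

text \<open>For A = \<Union> A_i \<times> {i}, the function \<Sum>_i 1_{A_i} (representative of \<pi>([A])).\<close>
definition count_fn :: "('x \<times> nat) set \<Rightarrow> 'x \<Rightarrow> int" where
  "count_fn A x = int (card {n. (x, n) \<in> A})"

text \<open>\<pi>([A]) = \<pi>([B]) in H(\<alpha>) iff the difference of representatives is a coboundary.\<close>
definition pi_injective :: "('g \<Rightarrow> 'x::topological_space \<Rightarrow> 'x) \<Rightarrow> bool" where
  "pi_injective \<alpha> \<longleftrightarrow>
     (\<forall>A B. bounded_clopen A \<longrightarrow> bounded_clopen B \<longrightarrow>
        (\<lambda>x. count_fn A x - count_fn B x) \<in> coboundaries \<alpha> \<longrightarrow> equidec \<alpha> A B)"

end

theory Submission
  imports Defs
begin
lemma clopen_vimage: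
  assumes "clopen_set S" "continuous_on UNIV f"
  shows "clopen_set (f -` S)"
  using assms unfolding clopen_set_def by (auto intro: open_vimage closed_vimage)

lemma clopen_int_vimage:
  assumes "continuous_on UNIV (f :: 'a::topological_space \<Rightarrow> int)"
  shows "clopen_set (f -` S)"
  by (rule clopen_vimage[OF _ assms]) (simp add: clopen_set_def open_discrete closed_open)

lemma clopen_Int: "clopen_set A \<Longrightarrow> clopen_set B \<Longrightarrow> clopen_set (A \<inter> B)"
  unfolding clopen_set_def by auto
lemma clopen_Un: "clopen_set A \<Longrightarrow> clopen_set B \<Longrightarrow> clopen_set (A \<union> B)"
  unfolding clopen_set_def by auto
lemma clopen_Diff: "clopen_set A \<Longrightarrow> clopen_set B \<Longrightarrow> clopen_set (A - B)"
  unfolding clopen_set_def by (auto intro: open_Diff closed_Diff)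
lemma clopen_empty: "clopen_set {}" unfolding clopen_set_def by auto
lemma clopen_UN: "finite I \<Longrightarrow> (\<And>i. i \<in> I \<Longrightarrow> clopen_set (P i)) \<Longrightarrow> clopen_set (\<Union>i\<in>I. P i)"
  unfolding clopen_set_def by (auto intro: closed_UN)

lemma slice_clopen:
  assumes "clopen_set (S :: ('x::topological_space \<times> nat) set)"
  shows "clopen_set {x. (x, n) \<in> S}"
proof -
  have "{x. (x, n) \<in> S} = (\<lambda>x. (x, n)) -` S" by auto
  moreover have "continuous_on UNIV (\<lambda>x::'x. (x, n))" by (intro continuous_intros)
  ultimately show ?thesis using clopen_vimage[OF assms] by simp
qed

lemma clopen_by_slices:
  assumes "\<And>n. clopen_set {x. (x, n) \<in> (S :: ('x::topological_space \<times> nat) set)}"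
  shows "clopen_set S"
proof -
  have e1: "S = (\<Union>n. {x. (x, n) \<in> S} \<times> {n})" by auto
  have e2: "- S = (\<Union>n. (- {x. (x, n) \<in> S}) \<times> {n})" by auto
  have "open S" apply (subst e1) apply (intro open_UN ballI open_Times)
    using assms unfolding clopen_set_def by (auto simp: open_discrete)
  moreover have "open (- S)" apply (subst e2) apply (intro open_UN ballI open_Times)
    using assms unfolding clopen_set_def by (auto simp: open_discrete)
  ultimately show ?thesis unfolding clopen_set_def by (simp add: closed_def)
qed

lemma continuous_indicator_clopen:
  assumes "clopen_set U"
  shows "continuous_on UNIV (\<lambda>x. if x \<in> U then (1::int) else 0)"
proof -
  have "continuous_on (U \<union> -U) (\<lambda>x. if x \<in> U then (1::int) else 0)"
    apply (rule continuous_on_cases)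
    using assms unfolding clopen_set_def by (auto simp: closed_Compl)
  then show ?thesis by simp
qed

lemma compact_int_bound:
  assumes "compact (UNIV :: 'x::topological_space set)" "continuous_on UNIV (f :: 'x \<Rightarrow> int)"
  shows "\<exists>K. \<forall>x. \<bar>f x\<bar> \<le> K"
proof -
  have "compact (range f)" using compact_continuous_image assms by blast
  then obtain T where T: "T \<subseteq> range f" "finite T" "range f \<subseteq> \<Union>((\<lambda>y. {y}) ` T)"
    by (rule compactE_image[of "range f" "range f" "\<lambda>y. {y}"]) (auto simp: open_discrete)
  then have fin: "finite (range f)" by (metis finite_subset UN_singleton)
  have "\<forall>x. \<bar>f x\<bar> \<le> Max (abs ` range f)"
    using fin by (intro allI Max_ge) auto
  then show ?thesis by blast
qed

definition Tm :: "('g \<Rightarrow> 'x \<Rightarrow> 'x) \<Rightarrow> 'g \<Rightarrow> (nat \<Rightarrow> nat) \<Rightarrow> 'x \<times> nat \<Rightarrow> 'x \<times> nat" where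
  "Tm \<alpha> g \<sigma> = (\<lambda>(x, k). (\<alpha> g x, \<sigma> k))"

lemma tact_Tm: "tact \<alpha> g \<sigma> P = Tm \<alpha> g \<sigma> ` P"
  unfolding tact_def Tm_def by simp

lemma Tm_apply[simp]: "Tm \<alpha> g \<sigma> (x, k) = (\<alpha> g x, \<sigma> k)"
  unfolding Tm_def by simp

locale act =
  fixes \<alpha> :: "'g::group_add \<Rightarrow> 'x::topological_space \<Rightarrow> 'x"
  assumes a0: "\<alpha> 0 = id" and aadd: "\<And>g h. \<alpha> (g + h) = \<alpha> g \<circ> \<alpha> h"
    and acont: "\<And>g. continuous_on UNIV (\<alpha> g)"
begin

lemma ainv1[simp]: "\<alpha> (-g) (\<alpha> g x) = x"
  using aadd[of "-g" g] a0 by (metis comp_apply id_apply left_minus)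
lemma ainv2[simp]: "\<alpha> g (\<alpha> (-g) x) = x"
  using aadd[of g "-g"] a0 by (metis comp_apply id_apply right_minus)

lemma Tm_inv1: "bij \<sigma> \<Longrightarrow> Tm \<alpha> (-g) (inv \<sigma>) (Tm \<alpha> g \<sigma> y) = y"
  by (cases y) (simp add: bij_is_inj)
lemma Tm_inv2: "bij \<sigma> \<Longrightarrow> Tm \<alpha> g \<sigma> (Tm \<alpha> (-g) (inv \<sigma>) y) = y"
  by (cases y) (simp add: bij_is_surj surj_f_inv_f)
lemma Tm_comp: "Tm \<alpha> h \<tau> (Tm \<alpha> g \<sigma> y) = Tm \<alpha> (h + g) (\<tau> \<circ> \<sigma>) y"
  by (cases y) (simp add: aadd)
lemma inj_Tm: "bij \<sigma> \<Longrightarrow> inj (Tm \<alpha> g \<sigma>)"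
  by (metis Tm_inv1 injI)

lemma tact_vimage: assumes b: "bij \<sigma>" shows "tact \<alpha> g \<sigma> P = Tm \<alpha> (-g) (inv \<sigma>) -` P"
proof (rule equalityI)
  show "tact \<alpha> g \<sigma> P \<subseteq> Tm \<alpha> (-g) (inv \<sigma>) -` P"
    unfolding tact_Tm using Tm_inv1[OF b] by auto
  show "Tm \<alpha> (-g) (inv \<sigma>) -` P \<subseteq> tact \<alpha> g \<sigma> P"
  proof
    fix y assume "y \<in> Tm \<alpha> (-g) (inv \<sigma>) -` P"
    then show "y \<in> tact \<alpha> g \<sigma> P" unfolding tact_Tm using Tm_inv2[OF b, of g y] by (metis image_eqI vimageE)
  qed
qed

lemma tact_comp: "tact \<alpha> h \<tau> (tact \<alpha> g \<sigma> P) = tact \<alpha> (h + g) (\<tau> \<circ> \<sigma>) P"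
  unfolding tact_Tm image_image Tm_comp by simp

lemma Tm_cont: "continuous_on UNIV (Tm \<alpha> g \<sigma>)"
proof -
  have "Tm \<alpha> g \<sigma> = (\<lambda>y. (\<alpha> g (fst y), \<sigma> (snd y)))" by (auto simp: Tm_def)
  moreover have "continuous_on UNIV (\<lambda>y::'x \<times> nat. (\<alpha> g (fst y), \<sigma> (snd y)))"
  proof (intro continuous_on_Pair)
    show "continuous_on UNIV (\<lambda>y::'x \<times> nat. \<alpha> g (fst y))"
      by (rule continuous_on_compose2[OF acont[of g]]) (auto intro: continuous_intros)
    show "continuous_on UNIV (\<lambda>y::'x \<times> nat. \<sigma> (snd y))"
      by (rule continuous_on_compose2[of UNIV \<sigma>]) (auto intro: continuous_intros)
  qed
  ultimately show ?thesis by simp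
qed

lemma clopen_tact: "clopen_set P \<Longrightarrow> bij \<sigma> \<Longrightarrow> clopen_set (tact \<alpha> g \<sigma> P)"
  by (simp add: tact_vimage clopen_vimage Tm_cont)

lemma clopen_Tm_vimage: "clopen_set P \<Longrightarrow> clopen_set (Tm \<alpha> g \<sigma> -` P)"
  by (simp add: clopen_vimage Tm_cont)

lemma disj_reindex:
  assumes "disjoint_family_on F I" "inj_on h X" "h ` X \<subseteq> I"
  shows "disjoint_family_on (F \<circ> h) X"
  unfolding disjoint_family_on_def
proof (intro ballI impI)
  fix m k assume "m \<in> X" "k \<in> X" "m \<noteq> k"
  then have "h m \<noteq> h k" "h m \<in> I" "h k \<in> I" using assms(2,3) by (auto simp: inj_on_def)
  then show "(F \<circ> h) m \<inter> (F \<circ> h) k = {}" using assms(1) by (auto simp: disjoint_family_on_def)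
qed

lemma equidecI_fin:
  assumes "finite I" "\<And>i. i \<in> I \<Longrightarrow> clopen_set (P i) \<and> bij (s i)"
    "disjoint_family_on P I" "A = (\<Union>i\<in>I. P i)"
    "disjoint_family_on (\<lambda>i. tact \<alpha> (g i) (s i) (P i)) I"
    "B = (\<Union>i\<in>I. tact \<alpha> (g i) (s i) (P i))"
  shows "equidec \<alpha> A B"
proof -
  obtain h where h: "bij_betw h {..<card I} I"
    using ex_bij_betw_nat_finite[OF assms(1)] by (auto simp: atLeast0LessThan)
  have hI: "h ` {..<card I} = I" and hinj: "inj_on h {..<card I}" using h by (auto simp: bij_betw_def)
  show ?thesis unfolding equidec_def
  proof (intro exI conjI)
    show "\<forall>i<card I. clopen_set ((P \<circ> h) i) \<and> bij ((s \<circ> h) i)"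
      using assms(2) hI by auto
    show "disjoint_family_on (P \<circ> h) {..<card I}"
      using disj_reindex[OF assms(3) hinj] hI by auto
    show "A = (\<Union>i<card I. (P \<circ> h) i)"
      using assms(4) hI by (metis image_comp)
    show "disjoint_family_on (\<lambda>i. tact \<alpha> ((g \<circ> h) i) ((s \<circ> h) i) ((P \<circ> h) i)) {..<card I}"
      using disj_reindex[OF assms(5) hinj] hI by (auto simp: comp_def)
    show "B = (\<Union>i<card I. tact \<alpha> ((g \<circ> h) i) ((s \<circ> h) i) ((P \<circ> h) i))"
    proof -
      have "(\<Union>i<card I. tact \<alpha> ((g \<circ> h) i) ((s \<circ> h) i) ((P \<circ> h) i)) = (\<Union>i\<in>h ` {..<card I}. tact \<alpha> (g i) (s i) (P i))"
        by simp
      then show ?thesis using assms(6) hI by simp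
    qed
  qed
qed

lemma equidec_single: "clopen_set P \<Longrightarrow> bij \<sigma> \<Longrightarrow> equidec \<alpha> P (tact \<alpha> g \<sigma> P)"
  by (rule equidecI_fin[of "{0::nat}" "\<lambda>_. P" "\<lambda>_. \<sigma>" _ "\<lambda>_. g"])
     (auto simp: disjoint_family_on_def)

lemma tact_id: "tact \<alpha> 0 id P = P"
  unfolding tact_Tm by (auto simp: Tm_def a0 image_iff)

lemma equidec_refl: "clopen_set P \<Longrightarrow> equidec \<alpha> P P"
  using equidec_single[of P id 0] by (simp add: tact_id)

lemma equidec_empty: "equidec \<alpha> {} {}"
  unfolding equidec_def by (intro exI[of _ 0]) (auto simp: disjoint_family_on_def)

lemma equidec_clopen:
  assumes "equidec \<alpha> A B" shows "clopen_set A" "clopen_set B"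
proof -
  obtain n and P :: "nat \<Rightarrow> ('x \<times> nat) set" and g :: "nat \<Rightarrow> 'g" and s :: "nat \<Rightarrow> nat \<Rightarrow> nat" where H: "\<forall>i<n. clopen_set (P i) \<and> bij (s i)" "A = (\<Union>i<n. P i)"
    "B = (\<Union>i<n. tact \<alpha> (g i) (s i) (P i))"
    using assms unfolding equidec_def by blast
  show "clopen_set A" using H by (auto intro: clopen_UN)
  show "clopen_set B" using H by (auto intro!: clopen_UN clopen_tact)
qed

end

context act begin

lemma tact_inv: "bij \<sigma> \<Longrightarrow> tact \<alpha> (-g) (inv \<sigma>) (tact \<alpha> g \<sigma> P) = P"
  by (simp add: tact_comp bij_is_inj tact_id)

lemma equidecE:
  assumes "equidec \<alpha> A B"
  obtains n and P :: "nat \<Rightarrow> ('x \<times> nat) set" and s :: "nat \<Rightarrow> nat \<Rightarrow> nat" and g :: "nat \<Rightarrow> 'g"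
  where "\<And>i. i < n \<Longrightarrow> clopen_set (P i)" "\<And>i. i < n \<Longrightarrow> bij (s i)"
    "disjoint_family_on P {..<n}" "A = (\<Union>i<n. P i)"
    "disjoint_family_on (\<lambda>i. tact \<alpha> (g i) (s i) (P i)) {..<n}"
    "B = (\<Union>i<n. tact \<alpha> (g i) (s i) (P i))"
  using assms unfolding equidec_def by blast

lemma equidec_sym: assumes "equidec \<alpha> A B" shows "equidec \<alpha> B A"
proof -
  obtain n :: nat and P s g where H: "\<And>i. i < n \<Longrightarrow> clopen_set (P i)" "\<And>i. i < n \<Longrightarrow> bij (s i)"
    "disjoint_family_on P {..<n}" "A = (\<Union>i<n. P i)"
    "disjoint_family_on (\<lambda>i. tact \<alpha> (g i) (s i) (P i)) {..<n}"
    "B = (\<Union>i<n. tact \<alpha> (g i) (s i) (P i))" using assms by (rule equidecE) (rule that)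
  have e: "\<And>i. i < n \<Longrightarrow> tact \<alpha> (- g i) (inv (s i)) (tact \<alpha> (g i) (s i) (P i)) = P i"
    using H(2) tact_inv by blast
  show ?thesis
  proof (rule equidecI_fin[of "{..<n}" "\<lambda>i. tact \<alpha> (g i) (s i) (P i)" "\<lambda>i. inv (s i)" _ "\<lambda>i. - g i"])
    show "disjoint_family_on (\<lambda>i. tact \<alpha> (- g i) (inv (s i)) (tact \<alpha> (g i) (s i) (P i))) {..<n}"
      using H(3) e unfolding disjoint_family_on_def by auto
    show "A = (\<Union>i\<in>{..<n}. tact \<alpha> (- g i) (inv (s i)) (tact \<alpha> (g i) (s i) (P i)))"
      using H(4) e by auto
    show "\<And>i. i \<in> {..<n} \<Longrightarrow> clopen_set (tact \<alpha> (g i) (s i) (P i)) \<and> bij (inv (s i))"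
      using H(1,2) by (simp add: clopen_tact bij_imp_bij_inv)
  qed (use H(5,6) in simp_all)
qed

lemma equidec_union:
  assumes "equidec \<alpha> A B" "equidec \<alpha> C D" "A \<inter> C = {}" "B \<inter> D = {}"
  shows "equidec \<alpha> (A \<union> C) (B \<union> D)"
proof -
  obtain n :: nat and P s g where H: "\<And>i. i < n \<Longrightarrow> clopen_set (P i)" "\<And>i. i < n \<Longrightarrow> bij (s i)"
    "disjoint_family_on P {..<n}" "A = (\<Union>i<n. P i)"
    "disjoint_family_on (\<lambda>i. tact \<alpha> (g i) (s i) (P i)) {..<n}"
    "B = (\<Union>i<n. tact \<alpha> (g i) (s i) (P i))" using assms(1) by (rule equidecE) (rule that)
  obtain m :: nat and Q t h where K: "\<And>i. i < m \<Longrightarrow> clopen_set (Q i)" "\<And>i. i < m \<Longrightarrow> bij (t i)"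
    "disjoint_family_on Q {..<m}" "C = (\<Union>i<m. Q i)"
    "disjoint_family_on (\<lambda>i. tact \<alpha> (h i) (t i) (Q i)) {..<m}"
    "D = (\<Union>i<m. tact \<alpha> (h i) (t i) (Q i))" using assms(2) by (rule equidecE) (rule that)
  show ?thesis
  proof (rule equidecI_fin[of "{..<n} <+> {..<m}" "case_sum P Q" "case_sum s t" _ "case_sum g h"])
    show "finite ({..<n} <+> {..<m})" by simp
    show "\<And>i. i \<in> {..<n} <+> {..<m} \<Longrightarrow> clopen_set (case_sum P Q i) \<and> bij (case_sum s t i)"
      using H K by auto
    show "disjoint_family_on (case_sum P Q) ({..<n} <+> {..<m})"
      unfolding disjoint_family_on_def
    proof (intro ballI impI)
      fix i j assume ij: "i \<in> {..<n} <+> {..<m}" "j \<in> {..<n} <+> {..<m}" "i \<noteq> j"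
      show "case_sum P Q i \<inter> case_sum P Q j = {}"
        using ij H(3,4) K(3,4) assms(3) unfolding disjoint_family_on_def by (cases i; cases j; simp) blast+
    qed
    show "A \<union> C = (\<Union>i\<in>{..<n} <+> {..<m}. case_sum P Q i)"
      using H(4) K(4) by auto
    show "disjoint_family_on (\<lambda>i. tact \<alpha> (case_sum g h i) (case_sum s t i) (case_sum P Q i)) ({..<n} <+> {..<m})"
      unfolding disjoint_family_on_def
    proof (intro ballI impI)
      fix i j assume ij: "i \<in> {..<n} <+> {..<m}" "j \<in> {..<n} <+> {..<m}" "i \<noteq> j"
      show "tact \<alpha> (case_sum g h i) (case_sum s t i) (case_sum P Q i) \<inter> tact \<alpha> (case_sum g h j) (case_sum s t j) (case_sum P Q j) = {}"
        using ij H(5,6) K(5,6) assms(4) unfolding disjoint_family_on_def by (cases i; cases j; simp) blast+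
    qed
    show "B \<union> D = (\<Union>i\<in>{..<n} <+> {..<m}. tact \<alpha> (case_sum g h i) (case_sum s t i) (case_sum P Q i))"
      using H(6) K(6) by auto
  qed
qed

end

context act begin

lemma equidec_trans:
  assumes "equidec \<alpha> A B" "equidec \<alpha> B C"
  shows "equidec \<alpha> A C"
proof -
  obtain n :: nat and P s g where H: "\<And>i. i < n \<Longrightarrow> clopen_set (P i)" "\<And>i. i < n \<Longrightarrow> bij (s i)"
    "disjoint_family_on P {..<n}" "A = (\<Union>i<n. P i)"
    "disjoint_family_on (\<lambda>i. tact \<alpha> (g i) (s i) (P i)) {..<n}"
    "B = (\<Union>i<n. tact \<alpha> (g i) (s i) (P i))" using assms(1) by (rule equidecE) (rule that)
  obtain m :: nat and Q t h where K: "\<And>i. i < m \<Longrightarrow> clopen_set (Q i)" "\<And>i. i < m \<Longrightarrow> bij (t i)"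
    "disjoint_family_on Q {..<m}" "B = (\<Union>i<m. Q i)"
    "disjoint_family_on (\<lambda>i. tact \<alpha> (h i) (t i) (Q i)) {..<m}"
    "C = (\<Union>i<m. tact \<alpha> (h i) (t i) (Q i))" using assms(2) by (rule equidecE) (rule that)
  define R where "R = (\<lambda>(i, j). P i \<inter> Tm \<alpha> (g i) (s i) -` Q j)"
  define G where "G = (\<lambda>(i::nat, j::nat). h j + g i)"
  define S where "S = (\<lambda>(i::nat, j::nat). t j \<circ> s i)"
  have img: "tact \<alpha> (G (i, j)) (S (i, j)) (R (i, j)) = Tm \<alpha> (h j) (t j) ` (Tm \<alpha> (g i) (s i) ` R (i, j))" for i j
    by (simp add: G_def S_def tact_Tm image_image Tm_comp)
  have Rsub: "Tm \<alpha> (g i) (s i) ` R (i, j) \<subseteq> Q j \<inter> Tm \<alpha> (g i) (s i) ` P i" for i j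
    unfolding R_def by auto
  have PT: "Tm \<alpha> (g i) (s i) ` P i = tact \<alpha> (g i) (s i) (P i)" for i by (simp add: tact_Tm)
  have QT: "Tm \<alpha> (h j) (t j) ` Q j = tact \<alpha> (h j) (t j) (Q j)" for j by (simp add: tact_Tm)
  show ?thesis
  proof (rule equidecI_fin[of "{..<n} \<times> {..<m}" R S _ G])
    show "finite ({..<n} \<times> {..<m})" by simp
    show "\<And>ij. ij \<in> {..<n} \<times> {..<m} \<Longrightarrow> clopen_set (R ij) \<and> bij (S ij)"
      using H(1,2) K(1,2) by (auto simp: R_def S_def intro!: clopen_Int clopen_Tm_vimage bij_comp)
    show "disjoint_family_on R ({..<n} \<times> {..<m})"
      unfolding disjoint_family_on_def
    proof (intro ballI impI)
      fix ij ij' assume a: "ij \<in> {..<n} \<times> {..<m}" "ij' \<in> {..<n} \<times> {..<m}" "ij \<noteq> ij'"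
      obtain i j i' j' where e: "ij = (i, j)" "ij' = (i', j')" by (cases ij, cases ij') auto
      show "R ij \<inter> R ij' = {}"
      proof (cases "i = i'")
        case True
        then have "j \<noteq> j'" using a e by auto
        then have "Q j \<inter> Q j' = {}" using K(3) a e unfolding disjoint_family_on_def by auto
        then show ?thesis using e True unfolding R_def by auto
      next
        case False
        then have "P i \<inter> P i' = {}" using H(3) a e unfolding disjoint_family_on_def by auto
        then show ?thesis using e unfolding R_def by auto
      qed
    qed
    show "A = (\<Union>ij\<in>{..<n} \<times> {..<m}. R ij)"
    proof (rule equalityI)
      show "A \<subseteq> (\<Union>ij\<in>{..<n} \<times> {..<m}. R ij)"
      proof
        fix y assume "y \<in> A"
        then obtain i where i: "i < n" "y \<in> P i" using H(4) by auto
        then have "Tm \<alpha> (g i) (s i) y \<in> B" using H(6) by (auto simp: tact_Tm)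
        then obtain j where j: "j < m" "Tm \<alpha> (g i) (s i) y \<in> Q j" using K(4) by auto
        then have "y \<in> R (i, j)" using i unfolding R_def by auto
        then show "y \<in> (\<Union>ij\<in>{..<n} \<times> {..<m}. R ij)" using i j by auto
      qed
      show "(\<Union>ij\<in>{..<n} \<times> {..<m}. R ij) \<subseteq> A"
        using H(4) unfolding R_def by auto
    qed
    show "disjoint_family_on (\<lambda>ij. tact \<alpha> (G ij) (S ij) (R ij)) ({..<n} \<times> {..<m})"
      unfolding disjoint_family_on_def
    proof (intro ballI impI)
      fix ij ij' assume a: "ij \<in> {..<n} \<times> {..<m}" "ij' \<in> {..<n} \<times> {..<m}" "ij \<noteq> ij'"
      obtain i j i' j' where e: "ij = (i, j)" "ij' = (i', j')" by (cases ij, cases ij') auto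
      have s1: "tact \<alpha> (G ij) (S ij) (R ij) \<subseteq> Tm \<alpha> (h j) (t j) ` (Q j \<inter> tact \<alpha> (g i) (s i) (P i))"
        using img[of i j] Rsub[of i j] e PT by (metis image_mono)
      have s2: "tact \<alpha> (G ij') (S ij') (R ij') \<subseteq> Tm \<alpha> (h j') (t j') ` (Q j' \<inter> tact \<alpha> (g i') (s i') (P i'))"
        using img[of i' j'] Rsub[of i' j'] e PT by (metis image_mono)
      show "tact \<alpha> (G ij) (S ij) (R ij) \<inter> tact \<alpha> (G ij') (S ij') (R ij') = {}"
      proof (cases "j = j'")
        case True
        then have "i \<noteq> i'" using a e by auto
        then have d: "tact \<alpha> (g i) (s i) (P i) \<inter> tact \<alpha> (g i') (s i') (P i') = {}"
          using H(5) a e unfolding disjoint_family_on_def by auto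
        have inj: "inj (Tm \<alpha> (h j) (t j))" using K(2) a e by (auto intro: inj_Tm)
        have "Tm \<alpha> (h j) (t j) ` (Q j \<inter> tact \<alpha> (g i) (s i) (P i)) \<inter> Tm \<alpha> (h j) (t j) ` (Q j \<inter> tact \<alpha> (g i') (s i') (P i')) = {}"
        proof -
          have "Tm \<alpha> (h j) (t j) ` (Q j \<inter> tact \<alpha> (g i) (s i) (P i)) \<inter> Tm \<alpha> (h j) (t j) ` (Q j \<inter> tact \<alpha> (g i') (s i') (P i'))
            = Tm \<alpha> (h j) (t j) ` ((Q j \<inter> tact \<alpha> (g i) (s i) (P i)) \<inter> (Q j \<inter> tact \<alpha> (g i') (s i') (P i')))"
            by (rule image_Int[OF inj, symmetric])
          also have "\<dots> = {}" using d by auto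
          finally show ?thesis .
        qed
        then show ?thesis using s1 s2 True by blast
      next
        case False
        then have "tact \<alpha> (h j) (t j) (Q j) \<inter> tact \<alpha> (h j') (t j') (Q j') = {}"
          using K(5) a e unfolding disjoint_family_on_def by auto
        then show ?thesis using s1 s2 QT by blast
      qed
    qed
    show "C = (\<Union>ij\<in>{..<n} \<times> {..<m}. tact \<alpha> (G ij) (S ij) (R ij))"
    proof (rule equalityI)
      show "C \<subseteq> (\<Union>ij\<in>{..<n} \<times> {..<m}. tact \<alpha> (G ij) (S ij) (R ij))"
      proof
        fix z assume "z \<in> C"
        then obtain j w where j: "j < m" "w \<in> Q j" "z = Tm \<alpha> (h j) (t j) w" using K(6) by (auto simp: tact_Tm)
        then have "w \<in> B" using K(4) by auto
        then obtain i y where i: "i < n" "y \<in> P i" "w = Tm \<alpha> (g i) (s i) y" using H(6) by (auto simp: tact_Tm)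
        then have "y \<in> R (i, j)" using j unfolding R_def by auto
        then have "z \<in> tact \<alpha> (G (i, j)) (S (i, j)) (R (i, j))" using img[of i j] i j by auto
        then show "z \<in> (\<Union>ij\<in>{..<n} \<times> {..<m}. tact \<alpha> (G ij) (S ij) (R ij))" using i j by blast
      qed
      show "(\<Union>ij\<in>{..<n} \<times> {..<m}. tact \<alpha> (G ij) (S ij) (R ij)) \<subseteq> C"
      proof
        fix z assume "z \<in> (\<Union>ij\<in>{..<n} \<times> {..<m}. tact \<alpha> (G ij) (S ij) (R ij))"
        then obtain i j where ij: "i < n" "j < m" "z \<in> tact \<alpha> (G (i, j)) (S (i, j)) (R (i, j))" by auto
        then have "z \<in> Tm \<alpha> (h j) (t j) ` Q j" using img[of i j] Rsub[of i j] by blast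
        then show "z \<in> C" using K(6) ij QT by auto
      qed
    qed
  qed
qed

end

definition bnd :: "('x \<times> nat) set \<Rightarrow> bool" where
  "bnd A \<longleftrightarrow> (\<exists>N. \<forall>x n. (x, n) \<in> A \<longrightarrow> n < N)"

lemma bounded_clopen_iff: "bounded_clopen A \<longleftrightarrow> clopen_set A \<and> bnd A"
  unfolding bounded_clopen_def bnd_def by simp

lemma bnd_subset: "bnd A \<Longrightarrow> B \<subseteq> A \<Longrightarrow> bnd B"
  unfolding bnd_def by blast

lemma bnd_Un: "bnd A \<Longrightarrow> bnd B \<Longrightarrow> bnd (A \<union> B)"
  unfolding bnd_def by (metis Un_iff max.strict_coboundedI1 max.strict_coboundedI2)

lemma bnd_finite: "bnd A \<Longrightarrow> finite {n. (x, n) \<in> A}"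
  unfolding bnd_def by (meson finite_nat_set_iff_bounded mem_Collect_eq)

lemma count_fn_Un:
  assumes "A \<inter> B = {}" "bnd A" "bnd B"
  shows "count_fn (A \<union> B) x = count_fn A x + count_fn B x"
proof -
  have "{n. (x, n) \<in> A \<union> B} = {n. (x, n) \<in> A} \<union> {n. (x, n) \<in> B}" by auto
  moreover have "{n. (x, n) \<in> A} \<inter> {n. (x, n) \<in> B} = {}" using assms(1) by auto
  ultimately show ?thesis unfolding count_fn_def
    using card_Un_disjoint[OF bnd_finite[OF assms(2)] bnd_finite[OF assms(3)], of x x] by simp
qed

lemma count_fn_UN:
  fixes n :: nat
  assumes "disjoint_family_on P {..<n}" "\<And>i. i < n \<Longrightarrow> bnd (P i)"
  shows "count_fn (\<Union>i<n. P i) x = (\<Sum>i<n. count_fn (P i) x)"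
  using assms
proof (induction n)
  case 0
  then show ?case by (simp add: count_fn_def)
next
  case (Suc n)
  have d: "disjoint_family_on P {..<n}" using Suc.prems(1) by (auto simp: disjoint_family_on_def)
  have e: "(\<Union>i<Suc n. P i) = (\<Union>i<n. P i) \<union> P n" by (auto simp: lessThan_Suc)
  have IH: "count_fn (\<Union>i<n. P i) x = (\<Sum>i<n. count_fn (P i) x)"
    using Suc.IH[OF d] Suc.prems(2) by simp
  have "P i \<inter> P n = {}" if "i < n" for i
    using Suc.prems(1) that unfolding disjoint_family_on_def by (metis lessThan_iff less_Suc_eq less_irrefl)
  then have "(\<Union>i<n. P i) \<inter> P n = {}" by blast
  moreover have "bnd (\<Union>i<n. P i)"
  proof -
    have "\<forall>i<n. \<exists>N. \<forall>x k. (x, k) \<in> P i \<longrightarrow> k < N" using Suc.prems(2) by (auto simp: bnd_def)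
    then obtain N where N: "\<forall>i<n. \<forall>x k. (x, k) \<in> P i \<longrightarrow> k < N i" by metis
    have "\<forall>x k. (x, k) \<in> (\<Union>i<n. P i) \<longrightarrow> k < Max (N ` {..<n}) + 1"
    proof (intro allI impI)
      fix x k assume "(x, k) \<in> (\<Union>i<n. P i)"
      then obtain i where "i < n" "(x, k) \<in> P i" by auto
      then have "k < N i" "N i \<le> Max (N ` {..<n})" using N by auto
      then show "k < Max (N ` {..<n}) + 1" by simp
    qed
    then show ?thesis unfolding bnd_def by blast
  qed
  ultimately have "count_fn (\<Union>i<Suc n. P i) x = count_fn (\<Union>i<n. P i) x + count_fn (P n) x"
    using e count_fn_Un[of "\<Union>i<n. P i" "P n" x] Suc.prems(2)[of n] by simp
  then show ?case using IH by simp
qed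

lemma count_fn_sum:
  assumes "\<forall>x k. (x, k) \<in> P \<longrightarrow> k < N"
  shows "count_fn P x = (\<Sum>k<N. if x \<in> {x. (x, k) \<in> P} then 1 else 0)"
proof -
  have "{n. (x, n) \<in> P} = {k \<in> {..<N}. (x, k) \<in> P}" using assms by auto
  then have "card {n. (x, n) \<in> P} = (\<Sum>k\<in>{..<N}. if (x, k) \<in> P then 1 else 0)"
    by (simp add: sum.If_cases, intro arg_cong[where f=card], auto)
  then have "int (card {n. (x, n) \<in> P}) = (\<Sum>k<N. int (if (x, k) \<in> P then 1 else 0))"
    by (simp only: of_nat_sum)
  also have "\<dots> = (\<Sum>k<N. if (x, k) \<in> P then 1 else 0)" by (rule sum.cong) auto
  finally show ?thesis unfolding count_fn_def by simp
qed

lemma count_cont: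
  assumes "clopen_set P" "bnd P"
  shows "continuous_on UNIV (count_fn P)"
proof -
  obtain N where N: "\<forall>x k. (x, k) \<in> P \<longrightarrow> k < N" using assms(2) by (auto simp: bnd_def)
  have "count_fn P = (\<lambda>x. \<Sum>k<N. if x \<in> {x. (x, k) \<in> P} then 1 else 0)"
    using count_fn_sum[OF N] by auto
  moreover have "continuous_on UNIV (\<lambda>x. \<Sum>k<N. if x \<in> {x. (x, k) \<in> P} then (1::int) else 0)"
    by (intro continuous_on_sum continuous_indicator_clopen slice_clopen assms(1))
  ultimately show ?thesis by simp
qed

lemma sum_split_add: fixes m n :: nat shows "(\<Sum>i<m + n. f i) = (\<Sum>i<m. f i) + (\<Sum>i<n. f (m + i))"
  by (induction n) (auto simp: add.assoc)

lemma cob_add: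
  assumes "h1 \<in> coboundaries \<alpha>" "h2 \<in> coboundaries \<alpha>"
  shows "(\<lambda>x. h1 x + h2 x) \<in> coboundaries \<alpha>"
proof -
  obtain n1 :: nat and f1 g1 where 1: "\<forall>i<n1. continuous_on UNIV (f1 i)" "h1 = (\<lambda>x. \<Sum>i<n1. f1 i x - f1 i (\<alpha> (g1 i) x))"
    using assms(1) unfolding coboundaries_def by blast
  obtain n2 :: nat and f2 g2 where 2: "\<forall>i<n2. continuous_on UNIV (f2 i)" "h2 = (\<lambda>x. \<Sum>i<n2. f2 i x - f2 i (\<alpha> (g2 i) x))"
    using assms(2) unfolding coboundaries_def by blast
  define f where "f = (\<lambda>i. if i < n1 then f1 i else f2 (i - n1))"
  define g where "g = (\<lambda>i. if i < n1 then g1 i else g2 (i - n1))"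
  have c: "\<forall>i<n1 + n2. continuous_on UNIV (f i)" using 1 2 by (auto simp: f_def)
  have "(\<Sum>i<n1 + n2. f i x - f i (\<alpha> (g i) x)) = h1 x + h2 x" for x
  proof -
    have "(\<Sum>i<n1 + n2. f i x - f i (\<alpha> (g i) x)) = (\<Sum>i<n1. f i x - f i (\<alpha> (g i) x)) + (\<Sum>i<n2. f (n1 + i) x - f (n1 + i) (\<alpha> (g (n1 + i)) x))"
      by (simp add: sum_split_add)
    also have "\<dots> = h1 x + h2 x" using 1 2 by (simp add: f_def g_def)
    finally show ?thesis .
  qed
  then have eq: "(\<lambda>x. h1 x + h2 x) = (\<lambda>x. \<Sum>i<n1 + n2. f i x - f i (\<alpha> (g i) x))" by simp
  show ?thesis unfolding coboundaries_def
    apply (rule CollectI, rule exI[of _ "n1 + n2"], rule exI[of _ f], rule exI[of _ g])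
    using c eq by simp
qed

lemma cob_neg:
  assumes "h \<in> coboundaries \<alpha>"
  shows "(\<lambda>x. - h x) \<in> coboundaries \<alpha>"
proof -
  obtain n :: nat and f g where 1: "\<forall>i<n. continuous_on UNIV (f i)" "h = (\<lambda>x. \<Sum>i<n. f i x - f i (\<alpha> (g i) x))"
    using assms unfolding coboundaries_def by blast
  have c: "\<forall>i<n. continuous_on UNIV (\<lambda>x. - f i x)"
  proof (intro allI impI)
    fix i assume "i < n"
    then show "continuous_on UNIV (\<lambda>x. - f i x)"
      by (intro continuous_on_compose2[of UNIV uminus UNIV "f i"]) (use 1 in auto)
  qed
  have "(\<lambda>x. - h x) = (\<lambda>x. \<Sum>i<n. (- f i x) - (- f i (\<alpha> (g i) x)))"
    using 1(2) by (simp add: sum_subtractf sum_negf)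
  note eq = this
  show ?thesis unfolding coboundaries_def
    apply (rule CollectI, rule exI[of _ n], rule exI[of _ "\<lambda>i x. - f i x"], rule exI[of _ g])
    using c eq by simp
qed

context act begin

lemma count_tact:
  assumes "bij \<sigma>"
  shows "count_fn (tact \<alpha> g \<sigma> P) x = count_fn P (\<alpha> (-g) x)"
proof -
  have "{n. (x, n) \<in> tact \<alpha> g \<sigma> P} = \<sigma> ` {k. (\<alpha> (-g) x, k) \<in> P}"
  proof (rule equalityI)
    show "{n. (x, n) \<in> tact \<alpha> g \<sigma> P} \<subseteq> \<sigma> ` {k. (\<alpha> (-g) x, k) \<in> P}"
    proof
      fix n assume "n \<in> {n. (x, n) \<in> tact \<alpha> g \<sigma> P}"
      then obtain y k where "(y, k) \<in> P" "x = \<alpha> g y" "n = \<sigma> k" by (auto simp: tact_Tm)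
      then show "n \<in> \<sigma> ` {k. (\<alpha> (-g) x, k) \<in> P}" by auto
    qed
    show "\<sigma> ` {k. (\<alpha> (-g) x, k) \<in> P} \<subseteq> {n. (x, n) \<in> tact \<alpha> g \<sigma> P}"
    proof
      fix n assume "n \<in> \<sigma> ` {k. (\<alpha> (-g) x, k) \<in> P}"
      then obtain k where k: "(\<alpha> (-g) x, k) \<in> P" "n = \<sigma> k" by auto
      then have "Tm \<alpha> g \<sigma> (\<alpha> (-g) x, k) = (x, n)" by simp
      then show "n \<in> {n. (x, n) \<in> tact \<alpha> g \<sigma> P}" using k unfolding tact_Tm by (metis image_eqI mem_Collect_eq)
    qed
  qed
  then show ?thesis unfolding count_fn_def
    using card_image[OF inj_on_subset[OF bij_is_inj[OF assms] subset_UNIV]] by simp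
qed

lemma equidec_count:
  assumes "equidec \<alpha> A B" "bnd A" "bnd B"
  shows "(\<lambda>x. count_fn A x - count_fn B x) \<in> coboundaries \<alpha>"
proof -
  obtain n :: nat and P s g where H: "\<And>i. i < n \<Longrightarrow> clopen_set (P i)" "\<And>i. i < n \<Longrightarrow> bij (s i)"
    "disjoint_family_on P {..<n}" "A = (\<Union>i<n. P i)"
    "disjoint_family_on (\<lambda>i. tact \<alpha> (g i) (s i) (P i)) {..<n}"
    "B = (\<Union>i<n. tact \<alpha> (g i) (s i) (P i))" using assms(1) by (rule equidecE) (rule that)
  have bP: "\<And>i. i < n \<Longrightarrow> bnd (P i)" using H(4) assms(2) bnd_subset by blast
  have bT: "\<And>i. i < n \<Longrightarrow> bnd (tact \<alpha> (g i) (s i) (P i))" using H(6) assms(3) bnd_subset by blast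
  have cA: "count_fn A x = (\<Sum>i<n. count_fn (P i) x)" for x
    using count_fn_UN[OF H(3) bP] H(4) by simp
  have cB: "count_fn B x = (\<Sum>i<n. count_fn (P i) (\<alpha> (- g i) x))" for x
    using count_fn_UN[OF H(5) bT] H(6) count_tact[OF H(2)] by simp
  have "(\<lambda>x. count_fn A x - count_fn B x) = (\<lambda>x. \<Sum>i<n. count_fn (P i) x - count_fn (P i) (\<alpha> (- g i) x))"
    using cA cB by (simp add: sum_subtractf)
  moreover have "\<forall>i<n. continuous_on UNIV (count_fn (P i))" using H(1) bP count_cont by blast
  ultimately show ?thesis unfolding coboundaries_def
    apply -
    apply (rule CollectI, rule exI[of _ n], rule exI[of _ "\<lambda>i. count_fn (P i)"], rule exI[of _ "\<lambda>i. - g i"])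
    by simp
qed

end

definition Sset :: "('x \<Rightarrow> int) \<Rightarrow> ('x \<times> nat) set" where
  "Sset c = {(x, n). int n < c x}"

definition swp :: "nat \<Rightarrow> nat \<Rightarrow> nat \<Rightarrow> nat" where
  "swp a b m = (if m = a then b else if m = b then a else m)"

lemma bij_swp: "bij (swp a b)"
proof -
  have "swp a b \<circ> swp a b = id" by (auto simp: swp_def fun_eq_iff)
  then show ?thesis using o_bij by blast
qed

lemma clopen_Times_nat: "clopen_set E \<Longrightarrow> clopen_set (E \<times> (K :: nat set))"
  unfolding clopen_set_def
  by (auto intro!: open_Times closed_Times simp: open_discrete closed_def)

lemma clopen_UNIV: "clopen_set UNIV" unfolding clopen_set_def by simp

context act begin

lemma tact0_Times: "tact \<alpha> 0 \<sigma> (S \<times> {N}) = S \<times> {\<sigma> N}"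
  unfolding tact_Tm by (auto simp: a0 image_iff)

lemma equidec_sort:
  fixes N :: nat
  shows "clopen_set A \<Longrightarrow> (\<forall>x k. (x, k) \<in> A \<longrightarrow> k < N) \<Longrightarrow> equidec \<alpha> A (Sset (count_fn A))"
proof (induction N arbitrary: A)
  case 0
  then have "A = {}" by auto
  moreover have "Sset (count_fn A) = {}" using \<open>A = {}\<close> by (simp add: Sset_def count_fn_def)
  ultimately show ?case using equidec_empty by simp
next
  case (Suc N)
  define A' where "A' = A \<inter> (UNIV \<times> {..<N})"
  define E where "E = {x. (x, N) \<in> A}"
  define c' where "c' = count_fn A'"
  have cA': "clopen_set A'" unfolding A'_def
    by (intro clopen_Int Suc.prems(1) clopen_Times_nat clopen_UNIV)
  have bA': "\<forall>x k. (x, k) \<in> A' \<longrightarrow> k < N" unfolding A'_def by auto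
  then have bndA': "bnd A'" unfolding bnd_def by blast
  have IH: "equidec \<alpha> A' (Sset c')" unfolding c'_def using Suc.IH[OF cA' bA'] .
  have cont: "continuous_on UNIV c'" unfolding c'_def using count_cont[OF cA' bndA'] .
  have c'le: "c' x \<le> int N" for x
  proof -
    have "{n. (x, n) \<in> A'} \<subseteq> {..<N}" using bA' by auto
    then have "card {n. (x, n) \<in> A'} \<le> N" using card_mono[of "{..<N}"] by fastforce
    then show ?thesis unfolding c'_def count_fn_def by simp
  qed
  have c'ge: "0 \<le> c' x" for x unfolding c'_def count_fn_def by simp
  have cE: "clopen_set E" unfolding E_def using slice_clopen[OF Suc.prems(1)] .
  have AE: "A = A' \<union> E \<times> {N}" unfolding A'_def E_def using Suc.prems(2) by (auto simp: less_Suc_eq)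
  have d1: "A' \<inter> E \<times> {N} = {}" unfolding A'_def by auto
  define Gs where "Gs = {(x, k). x \<in> E \<and> int k = c' x}"
  define Pk where "Pk = (\<lambda>k::nat. (E \<inter> c' -` {int k}) \<times> {N})"
  have imgk: "tact \<alpha> 0 (swp k N) (Pk k) = (E \<inter> c' -` {int k}) \<times> {k}" for k
    unfolding Pk_def tact0_Times by (simp add: swp_def)
  have eqG: "equidec \<alpha> (E \<times> {N}) Gs"
  proof (rule equidecI_fin[of "{..<Suc N}" Pk "\<lambda>k. swp k N" _ "\<lambda>k. 0"])
    show "finite {..<Suc N}" by simp
    show "\<And>i. i \<in> {..<Suc N} \<Longrightarrow> clopen_set (Pk i) \<and> bij (swp i N)"
      unfolding Pk_def using cE clopen_int_vimage[OF cont]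
      by (auto intro!: clopen_Times_nat clopen_Int bij_swp)
    show "disjoint_family_on Pk {..<Suc N}"
      unfolding disjoint_family_on_def Pk_def by auto
    show "E \<times> {N} = (\<Union>i\<in>{..<Suc N}. Pk i)"
    proof (rule equalityI)
      show "E \<times> {N} \<subseteq> (\<Union>i\<in>{..<Suc N}. Pk i)"
      proof
        fix y assume "y \<in> E \<times> {N}"
        then obtain x where x: "y = (x, N)" "x \<in> E" by auto
        have "c' x = int (nat (c' x))" using c'ge[of x] by simp
        moreover have "nat (c' x) < Suc N" using c'le[of x] by simp
        ultimately show "y \<in> (\<Union>i\<in>{..<Suc N}. Pk i)" unfolding Pk_def using x by blast
      qed
      show "(\<Union>i\<in>{..<Suc N}. Pk i) \<subseteq> E \<times> {N}" unfolding Pk_def by auto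
    qed
    show "disjoint_family_on (\<lambda>i. tact \<alpha> 0 (swp i N) (Pk i)) {..<Suc N}"
      unfolding disjoint_family_on_def imgk by auto
    show "Gs = (\<Union>i\<in>{..<Suc N}. tact \<alpha> 0 (swp i N) (Pk i))"
      unfolding imgk Gs_def using c'le by (auto simp: less_Suc_eq_le) (metis of_nat_le_iff)
  qed
  have d2: "Sset c' \<inter> Gs = {}" unfolding Sset_def Gs_def by auto
  have U: "equidec \<alpha> A (Sset c' \<union> Gs)"
    using equidec_union[OF IH eqG d1 d2] AE by simp
  have cnt: "count_fn A x = c' x + (if x \<in> E then 1 else 0)" for x
  proof -
    have "bnd (E \<times> {N})" unfolding bnd_def by auto
    then have "count_fn A x = c' x + count_fn (E \<times> {N}) x"
      unfolding c'_def using AE count_fn_Un[OF d1 bndA'] by simp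
    moreover have "{n. (x, n) \<in> E \<times> {N}} = (if x \<in> E then {N} else {})" by auto
    ultimately show ?thesis unfolding count_fn_def by simp
  qed
  have "Sset (count_fn A) = Sset c' \<union> Gs"
    unfolding Sset_def Gs_def cnt using c'ge by (auto split: if_splits)
  then show ?case using U by simp
qed

lemma equidec_of_count:
  assumes "bounded_clopen A" "bounded_clopen B" "\<And>x. count_fn A x = count_fn B x"
  shows "equidec \<alpha> A B"
proof -
  obtain NA where NA: "\<forall>x k. (x, k) \<in> A \<longrightarrow> k < NA" using assms(1) unfolding bounded_clopen_def by blast
  obtain NB where NB: "\<forall>x k. (x, k) \<in> B \<longrightarrow> k < NB" using assms(2) unfolding bounded_clopen_def by blast
  have "equidec \<alpha> A (Sset (count_fn A))"
    using equidec_sort[of A NA] assms(1) NA unfolding bounded_clopen_def by blast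
  moreover have "equidec \<alpha> B (Sset (count_fn A))"
    using equidec_sort[of B NB] assms(2,3) NB unfolding bounded_clopen_def
    by (metis ext)
  ultimately show ?thesis using equidec_sym equidec_trans by blast
qed

lemma equidec_shift:
  assumes "bounded_clopen A"
  shows "\<exists>A'. equidec \<alpha> A A' \<and> bounded_clopen A' \<and> (\<forall>x k. (x, k) \<in> A' \<longrightarrow> N \<le> k)"
proof -
  obtain M where M: "\<forall>x k. (x, k) \<in> A \<longrightarrow> k < M" using assms unfolding bounded_clopen_def by blast
  define D where "D = N + M"
  define \<sigma> where "\<sigma> = (\<lambda>m. if m < M then m + D else if D \<le> m \<and> m < D + M then m - D else m)"
  have "\<sigma> \<circ> \<sigma> = id" by (auto simp: \<sigma>_def D_def fun_eq_iff)
  then have b: "bij \<sigma>" using o_bij by blast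
  have cA: "clopen_set A" using assms unfolding bounded_clopen_def by blast
  define A' where "A' = tact \<alpha> 0 \<sigma> A"
  have mem: "(x, k) \<in> A' \<Longrightarrow> \<exists>j. j < M \<and> k = j + D" for x k
    unfolding A'_def tact_Tm using M by (force simp: \<sigma>_def)
  have "equidec \<alpha> A A'" unfolding A'_def by (rule equidec_single[OF cA b])
  moreover have "clopen_set A'" unfolding A'_def by (rule clopen_tact[OF cA b])
  moreover have "\<forall>x k. (x, k) \<in> A' \<longrightarrow> k < D + M" using mem by fastforce
  moreover have "\<forall>x k. (x, k) \<in> A' \<longrightarrow> N \<le> k" using mem D_def by fastforce
  ultimately show ?thesis unfolding bounded_clopen_def by blast
qed

end

lemma bc_Un: "bounded_clopen A \<Longrightarrow> bounded_clopen B \<Longrightarrow> bounded_clopen (A \<union> B)"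
  using bounded_clopen_iff bnd_Un clopen_Un by blast

context act begin

lemma Teq_equiv: "equiv {A. bounded_clopen A} (Teq \<alpha>)"
proof (rule equivI)
  show "Teq \<alpha> \<subseteq> {A. bounded_clopen A} \<times> {A. bounded_clopen A}" unfolding Teq_def by auto
  show "refl_on {A. bounded_clopen A} (Teq \<alpha>)"
    by (rule refl_onI) (auto simp: Teq_def bounded_clopen_def intro: equidec_refl)
  show "sym (Teq \<alpha>)" by (rule symI) (auto simp: Teq_def intro: equidec_sym)
  show "trans (Teq \<alpha>)" by (rule transI) (auto simp: Teq_def intro: equidec_trans)
qed

lemma Teq_iff: "(A, B) \<in> Teq \<alpha> \<longleftrightarrow> bounded_clopen A \<and> bounded_clopen B \<and> equidec \<alpha> A B"
  unfolding Teq_def by simp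

lemma Tplus_class:
  assumes "bounded_clopen X" "bounded_clopen Y" "X \<inter> Y = {}"
  shows "Tplus \<alpha> (Teq \<alpha> `` {X}) (Teq \<alpha> `` {Y}) = Teq \<alpha> `` {X \<union> Y}"
proof (rule equalityI)
  have bXY: "bounded_clopen (X \<union> Y)" using bc_Un assms by blast
  show "Tplus \<alpha> (Teq \<alpha> `` {X}) (Teq \<alpha> `` {Y}) \<subseteq> Teq \<alpha> `` {X \<union> Y}"
  proof
    fix D assume "D \<in> Tplus \<alpha> (Teq \<alpha> `` {X}) (Teq \<alpha> `` {Y})"
    then obtain A B where AB: "(X, A) \<in> Teq \<alpha>" "(Y, B) \<in> Teq \<alpha>" "A \<inter> B = {}" "(A \<union> B, D) \<in> Teq \<alpha>"
      unfolding Tplus_def by blast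
    have "equidec \<alpha> (X \<union> Y) (A \<union> B)"
      using equidec_union AB assms(3) unfolding Teq_iff by blast
    then have "equidec \<alpha> (X \<union> Y) D" using AB(4) equidec_trans unfolding Teq_iff by blast
    then have "(X \<union> Y, D) \<in> Teq \<alpha>" using bXY AB(4) unfolding Teq_iff by blast
    then show "D \<in> Teq \<alpha> `` {X \<union> Y}" by blast
  qed
  show "Teq \<alpha> `` {X \<union> Y} \<subseteq> Tplus \<alpha> (Teq \<alpha> `` {X}) (Teq \<alpha> `` {Y})"
  proof
    fix D assume D: "D \<in> Teq \<alpha> `` {X \<union> Y}"
    have "(X, X) \<in> Teq \<alpha>" "(Y, Y) \<in> Teq \<alpha>"
      using assms equidec_refl unfolding Teq_iff bounded_clopen_def by auto
    then have "X \<in> Teq \<alpha> `` {X}" "Y \<in> Teq \<alpha> `` {Y}" by auto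
    then show "D \<in> Tplus \<alpha> (Teq \<alpha> `` {X}) (Teq \<alpha> `` {Y})"
      unfolding Tplus_def using D assms(3) by blast
  qed
qed

lemma class_eq: "(A, B) \<in> Teq \<alpha> \<Longrightarrow> Teq \<alpha> `` {A} = Teq \<alpha> `` {B}"
  using equiv_class_eq[OF Teq_equiv] by blast

lemma class_eq_iff: "bounded_clopen A \<Longrightarrow> bounded_clopen B \<Longrightarrow> Teq \<alpha> `` {A} = Teq \<alpha> `` {B} \<longleftrightarrow> (A, B) \<in> Teq \<alpha>"
  using eq_equiv_class_iff[OF Teq_equiv] by blast

lemma disjoint_rep:
  assumes "bounded_clopen A" "bounded_clopen B"
  obtains B' where "(B, B') \<in> Teq \<alpha>" "bounded_clopen B'" "A \<inter> B' = {}"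
proof -
  obtain N where N: "\<forall>x k. (x, k) \<in> A \<longrightarrow> k < N" using assms(1) unfolding bounded_clopen_def by blast
  obtain B' where B': "equidec \<alpha> B B'" "bounded_clopen B'" "\<forall>x k. (x, k) \<in> B' \<longrightarrow> N \<le> k"
    using equidec_shift[OF assms(2)] by blast
  have "A \<inter> B' = {}" using N B'(3) by fastforce
  then show ?thesis using that B' assms(2) unfolding Teq_iff by blast
qed

lemma pi_inj_imp_canc:
  assumes "pi_injective \<alpha>"
  shows "T_cancellative \<alpha>"
  unfolding T_cancellative_def
proof (intro ballI impI)
  fix a b c assume a: "a \<in> Tsg \<alpha>" and b: "b \<in> Tsg \<alpha>" and c: "c \<in> Tsg \<alpha>"
    and eq: "Tplus \<alpha> a b = Tplus \<alpha> a c"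
  obtain A0 where A0: "a = Teq \<alpha> `` {A0}" "bounded_clopen A0" using a unfolding Tsg_def by (auto elim: quotientE)
  obtain B0 where B0: "b = Teq \<alpha> `` {B0}" "bounded_clopen B0" using b unfolding Tsg_def by (auto elim: quotientE)
  obtain C0 where C0: "c = Teq \<alpha> `` {C0}" "bounded_clopen C0" using c unfolding Tsg_def by (auto elim: quotientE)
  obtain B1 where B1: "(B0, B1) \<in> Teq \<alpha>" "bounded_clopen B1" "A0 \<inter> B1 = {}"
    using disjoint_rep[OF A0(2) B0(2)] by blast
  obtain C1 where C1: "(C0, C1) \<in> Teq \<alpha>" "bounded_clopen C1" "A0 \<inter> C1 = {}"
    using disjoint_rep[OF A0(2) C0(2)] by blast
  have b1: "b = Teq \<alpha> `` {B1}" using B0(1) class_eq[OF B1(1)] by simp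
  have c1: "c = Teq \<alpha> `` {C1}" using C0(1) class_eq[OF C1(1)] by simp
  have "Teq \<alpha> `` {A0 \<union> B1} = Teq \<alpha> `` {A0 \<union> C1}"
    using eq Tplus_class[OF A0(2) B1(2) B1(3)] Tplus_class[OF A0(2) C1(2) C1(3)] A0(1) b1 c1 by simp
  then have "(A0 \<union> B1, A0 \<union> C1) \<in> Teq \<alpha>"
    using class_eq_iff bc_Un A0(2) B1(2) C1(2) by blast
  then have ed: "equidec \<alpha> (A0 \<union> B1) (A0 \<union> C1)" unfolding Teq_iff by blast
  have bA: "bnd A0" "bnd B1" "bnd C1" using A0(2) B1(2) C1(2) bounded_clopen_iff by blast+
  have "(\<lambda>x. count_fn (A0 \<union> B1) x - count_fn (A0 \<union> C1) x) \<in> coboundaries \<alpha>"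
    using equidec_count[OF ed] bA bnd_Un by blast
  moreover have "(\<lambda>x. count_fn (A0 \<union> B1) x - count_fn (A0 \<union> C1) x) = (\<lambda>x. count_fn B1 x - count_fn C1 x)"
    using count_fn_Un[OF B1(3) bA(1,2)] count_fn_Un[OF C1(3) bA(1,3)] by simp
  ultimately have "(\<lambda>x. count_fn B1 x - count_fn C1 x) \<in> coboundaries \<alpha>" by simp
  then have "equidec \<alpha> B1 C1" using assms B1(2) C1(2) unfolding pi_injective_def by blast
  then have "(B1, C1) \<in> Teq \<alpha>" using B1(2) C1(2) unfolding Teq_iff by blast
  then show "b = c" using b1 c1 class_eq by simp
qed

end

lemma uniform_bound:
  fixes n :: nat and f :: "nat \<Rightarrow> 'x \<Rightarrow> int"
  assumes "\<And>i. i < n \<Longrightarrow> \<exists>K. \<forall>x. \<bar>f i x\<bar> \<le> K"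
  shows "\<exists>K. 0 \<le> K \<and> (\<forall>i<n. \<forall>x. \<bar>f i x\<bar> \<le> K)"
  using assms
proof (induction n)
  case 0
  then show ?case by auto
next
  case (Suc n)
  obtain K1 where K1: "0 \<le> K1" "\<forall>i<n. \<forall>x. \<bar>f i x\<bar> \<le> K1" using Suc by auto
  obtain K2 where K2: "\<forall>x. \<bar>f n x\<bar> \<le> K2" using Suc.prems[of n] by auto
  have "\<forall>i<Suc n. \<forall>x. \<bar>f i x\<bar> \<le> max K1 K2"
    using K1 K2 by (auto simp: less_Suc_eq intro: order_trans[OF _ max.cobounded1] order_trans[OF _ max.cobounded2])
  then show ?case using K1(1) by (intro exI[of _ "max K1 K2"]) auto
qed

lemma lev_inj:
  fixes i i' j j' W :: nat
  assumes "j < W" "j' < W" "i * W + j = i' * W + j'"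
  shows "i = i'"
proof (rule ccontr)
  assume ne: "i \<noteq> i'"
  have *: "a * W + b < c * W + d" if "a < c" "b < W" for a b c d :: nat
  proof -
    have "Suc a * W \<le> c * W" using that(1) by (intro mult_le_mono1) simp
    then show ?thesis using that(2) by simp
  qed
  show False
  proof (cases "i < i'")
    case True
    have "i * W + j < i' * W + j'" using *[of i i' j j'] True assms(1) by blast
    then show False using assms(3) by simp
  next
    case False
    then have "i' < i" using ne by simp
    have "i' * W + j' < i * W + j" using *[of i' i j' j] \<open>i' < i\<close> assms(2) by blast
    then show False using assms(3) by simp
  qed
qed

lemma card_int_less: "card {j::nat. int j < z} = nat z"
proof -
  have "{j::nat. int j < z} = {..<nat z}" by (auto simp: zless_nat_eq_int_zless)
  then show ?thesis by simp
qed

context act begin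

lemma canc_imp_pi_inj:
  assumes compact: "compact (UNIV :: 'x set)" and canc: "T_cancellative \<alpha>"
  shows "pi_injective \<alpha>"
  unfolding pi_injective_def
proof (intro allI impI)
  fix A B assume bA: "bounded_clopen A" and bB: "bounded_clopen B"
    and cob: "(\<lambda>x. count_fn A x - count_fn B x) \<in> coboundaries \<alpha>"
  obtain n :: nat and f g where fc: "\<forall>i<n. continuous_on UNIV (f i)"
    and h: "(\<lambda>x. count_fn A x - count_fn B x) = (\<lambda>x. \<Sum>i<n. f i x - f i (\<alpha> (g i) x))"
    using cob unfolding coboundaries_def by blast
  obtain K where K: "0 \<le> K" "\<forall>i<n. \<forall>x. \<bar>f i x\<bar> \<le> K"
    using uniform_bound[of n f] compact_int_bound[OF compact] fc by blast
  define F where "F = (\<lambda>i x. f i x + K)"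
  have Fcont: "continuous_on UNIV (F i)" if "i < n" for i
    unfolding F_def
    by (intro continuous_on_compose2[of UNIV "\<lambda>y. y + K" UNIV "f i"]) (use fc that in auto)
  define W where "W = nat (2 * K) + 1"
  have fK: "\<bar>f i x\<bar> \<le> K" if "i < n" for i x using K(2) that by blast
  have F0: "0 \<le> F i x" if "i < n" for i x using fK[OF that, of x] unfolding F_def by (simp add: abs_le_iff)
  have FW: "F i x < int W" if "i < n" for i x using fK[OF that, of x] K(1) unfolding F_def W_def by (simp add: abs_le_iff)
  obtain NA where NA: "\<forall>x k. (x, k) \<in> A \<longrightarrow> k < NA" using bA unfolding bounded_clopen_def by blast
  obtain NB where NB: "\<forall>x k. (x, k) \<in> B \<longrightarrow> k < NB" using bB unfolding bounded_clopen_def by blast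
  define base where "base = NA + NB"
  define Qp where "Qp = (\<lambda>i. {(x, m). \<exists>j. m = base + i * W + j \<and> int j < F i x})"
  define Rp where "Rp = (\<lambda>i. tact \<alpha> (- g i) id (Qp i))"
  define Q where "Q = (\<Union>i<n. Qp i)"
  define R where "R = (\<Union>i<n. Rp i)"
  have Rp_mem: "(x, m) \<in> Rp i \<longleftrightarrow> (\<alpha> (g i) x, m) \<in> Qp i" for x m i
    unfolding Rp_def tact_vimage[OF bij_id] by simp
  have levQ: "\<exists>j<W. m = base + i * W + j" if mem: "(x, m) \<in> Qp i" and ilt: "i < n" for x m i
  proof -
    obtain j where j: "m = base + i * W + j" "int j < F i x" using mem unfolding Qp_def by auto
    then have "int j < int W" using FW[OF ilt, of x] by simp
    then show ?thesis using j by auto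
  qed
  have levR: "\<exists>j<W. m = base + i * W + j" if "(x, m) \<in> Rp i" "i < n" for x m i
    using levQ that Rp_mem by blast
  have levbound: "base \<le> m \<and> m < base + n * W" if "j < W" "m = base + i * W + j" "i < n" for i j m
  proof -
    have "Suc i * W \<le> n * W" using that(3) by (intro mult_le_mono1) simp
    then show ?thesis using that(1,2) by simp
  qed
  have disjQ: "disjoint_family_on Qp {..<n}"
    unfolding disjoint_family_on_def
  proof (intro ballI impI)
    fix i i' assume ii: "i \<in> {..<n}" "i' \<in> {..<n}" "i \<noteq> i'"
    show "Qp i \<inter> Qp i' = {}"
    proof (rule ccontr)
      assume "Qp i \<inter> Qp i' \<noteq> {}"
      then obtain x m where "(x, m) \<in> Qp i" "(x, m) \<in> Qp i'" by auto
      then obtain j j' where "j < W" "j' < W" "m = base + i * W + j" "m = base + i' * W + j'"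
        using levQ ii by (metis lessThan_iff)
      then have "i = i'" using lev_inj[of j W j' i i'] by simp
      then show False using ii by simp
    qed
  qed
  have disjR: "disjoint_family_on (\<lambda>i. tact \<alpha> (- g i) (id) (Qp i)) {..<n}"
    unfolding disjoint_family_on_def
  proof (intro ballI impI)
    fix i i' assume ii: "i \<in> {..<n}" "i' \<in> {..<n}" "i \<noteq> i'"
    show "tact \<alpha> (- g i) id (Qp i) \<inter> tact \<alpha> (- g i') id (Qp i') = {}"
    proof (rule ccontr)
      assume "tact \<alpha> (- g i) id (Qp i) \<inter> tact \<alpha> (- g i') id (Qp i') \<noteq> {}"
      then obtain x m where "(x, m) \<in> Rp i" "(x, m) \<in> Rp i'" unfolding Rp_def by auto
      then obtain j j' where "j < W" "j' < W" "m = base + i * W + j" "m = base + i' * W + j'"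
        using levR ii by (metis lessThan_iff)
      then have "i = i'" using lev_inj[of j W j' i i'] by simp
      then show False using ii by simp
    qed
  qed
  have cQp: "clopen_set (Qp i)" if "i < n" for i
  proof (rule clopen_by_slices)
    fix m
    have "{x. (x, m) \<in> Qp i} = (if base + i * W \<le> m then F i -` {int (m - (base + i * W))<..} else {})"
      unfolding Qp_def by (auto simp: le_iff_add)
    then show "clopen_set {x. (x, m) \<in> Qp i}"
      using clopen_int_vimage[OF Fcont[OF that]] by (simp add: clopen_set_def)
  qed
  have eqQR: "equidec \<alpha> Q R"
    unfolding Q_def R_def Rp_def
    by (rule equidecI_fin[of "{..<n}" Qp "\<lambda>i. id" _ "\<lambda>i. - g i"]) (use cQp disjQ disjR in auto)
  have bndQ: "bnd Q"
    unfolding bnd_def Q_def using levQ levbound by blast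
  have bndR: "bnd R"
    unfolding bnd_def R_def using levR levbound by blast
  have bcQ: "bounded_clopen Q" using bndQ equidec_clopen(1)[OF eqQR] bounded_clopen_iff by blast
  have bcR: "bounded_clopen R" using bndR equidec_clopen(2)[OF eqQR] bounded_clopen_iff by blast
  have cntQp: "count_fn (Qp i) x = F i x" if "i < n" for i x
  proof -
    have "{m. (x, m) \<in> Qp i} = (\<lambda>j. base + i * W + j) ` {j. int j < F i x}"
      unfolding Qp_def by auto
    then have "card {m. (x, m) \<in> Qp i} = card {j. int j < F i x}"
      by (simp add: card_image inj_on_def)
    then show ?thesis unfolding count_fn_def using card_int_less F0[OF that] by simp
  qed
  have cntRp: "count_fn (Rp i) x = F i (\<alpha> (g i) x)" if "i < n" for i x
    unfolding Rp_def using count_tact[OF bij_id, of "- g i" "Qp i" x] cntQp[OF that] by simp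
  have bQp: "bnd (Qp i)" if "i < n" for i using bndQ bnd_subset that unfolding Q_def by blast
  have bRp: "bnd (Rp i)" if "i < n" for i using bndR bnd_subset that unfolding R_def by blast
  have cntQ: "count_fn Q x = (\<Sum>i<n. F i x)" for x
    unfolding Q_def using count_fn_UN[OF disjQ bQp] cntQp by simp
  have cntR: "count_fn R x = (\<Sum>i<n. F i (\<alpha> (g i) x))" for x
    unfolding R_def using count_fn_UN[of Rp n x] disjR bRp cntRp unfolding Rp_def by simp
  have dAR: "R \<inter> A = {}"
  proof -
    have "(x, m) \<in> R \<Longrightarrow> base \<le> m" for x m unfolding R_def using levR levbound by blast
    then show ?thesis using NA unfolding base_def by fastforce
  qed
  have dBQ: "Q \<inter> B = {}"
  proof -
    have "(x, m) \<in> Q \<Longrightarrow> base \<le> m" for x m unfolding Q_def using levQ levbound by blast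
    then show ?thesis using NB unfolding base_def by fastforce
  qed
  have bndA: "bnd A" and bndB: "bnd B" using bA bB bounded_clopen_iff by blast+
  have hx: "count_fn A x - count_fn B x = (\<Sum>i<n. F i x) - (\<Sum>i<n. F i (\<alpha> (g i) x))" for x
  proof -
    have "count_fn A x - count_fn B x = (\<Sum>i<n. f i x - f i (\<alpha> (g i) x))" using h by metis
    also have "\<dots> = (\<Sum>i<n. F i x - F i (\<alpha> (g i) x))" unfolding F_def by simp
    finally show ?thesis by (simp add: sum_subtractf)
  qed
  have "count_fn (R \<union> A) x = count_fn (Q \<union> B) x" for x
    using count_fn_Un[OF dAR bndR bndA, of x] count_fn_Un[OF dBQ bndQ bndB, of x] cntQ cntR hx[of x]
    by simp
  then have "equidec \<alpha> (R \<union> A) (Q \<union> B)"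
    using equidec_of_count bc_Un bcR bA bcQ bB by blast
  then have RAQB: "(R \<union> A, Q \<union> B) \<in> Teq \<alpha>" unfolding Teq_iff using bc_Un bcR bA bcQ bB by blast
  have RQ: "(R, Q) \<in> Teq \<alpha>" unfolding Teq_iff using bcR bcQ equidec_sym[OF eqQR] by blast
  have inT: "Teq \<alpha> `` {R} \<in> Tsg \<alpha>" "Teq \<alpha> `` {A} \<in> Tsg \<alpha>" "Teq \<alpha> `` {B} \<in> Tsg \<alpha>"
    unfolding Tsg_def using bcR bA bB by (auto intro: quotientI)
  have "Tplus \<alpha> (Teq \<alpha> `` {R}) (Teq \<alpha> `` {A}) = Teq \<alpha> `` {R \<union> A}"
    using Tplus_class[OF bcR bA dAR] .
  also have "\<dots> = Teq \<alpha> `` {Q \<union> B}" using class_eq[OF RAQB] .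
  also have "\<dots> = Tplus \<alpha> (Teq \<alpha> `` {Q}) (Teq \<alpha> `` {B})"
    using Tplus_class[OF bcQ bB dBQ] by simp
  also have "\<dots> = Tplus \<alpha> (Teq \<alpha> `` {R}) (Teq \<alpha> `` {B})"
    using class_eq[OF RQ] by simp
  finally have "Teq \<alpha> `` {A} = Teq \<alpha> `` {B}"
    using canc inT unfolding T_cancellative_def by blast
  then have "(A, B) \<in> Teq \<alpha>" using class_eq_iff bA bB by blast
  then show "equidec \<alpha> A B" unfolding Teq_iff by blast
qed

end

theorem mainTheorem10:
  fixes \<alpha> :: "'g::group_add \<Rightarrow> 'x::t2_space \<Rightarrow> 'x"
  assumes "countable (UNIV :: 'g set)"
    and "compact (UNIV :: 'x set)"
    and "\<forall>(U :: 'x set) x. open U \<and> x \<in> U \<longrightarrow> (\<exists>V. open V \<and> closed V \<and> x \<in> V \<and> V \<subseteq> U)"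
    and "\<alpha> 0 = id"
    and "\<forall>g h. \<alpha> (g + h) = \<alpha> g \<circ> \<alpha> h"
    and "\<forall>g. continuous_on UNIV (\<alpha> g)"
  shows "pi_injective \<alpha> \<longleftrightarrow> T_cancellative \<alpha>"
proof -
  interpret act \<alpha> by unfold_locales (use assms in auto)
  show ?thesis using pi_inj_imp_canc canc_imp_pi_inj assms(2) by blast
qed

end
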